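(* Let $H$ be a Hopf algebra (coproduct $\Delta h=h_{(1)}\otimes h_{(2)}$, counit $\epsilon$, antipode $S$) over a field $k$. Then $(H,\Omega^1H)$ has a quantum frame resolution with total space $P=H$, structure quantum group $k$ (so $M=H$), $V=\ker\epsilon\subset H$ with trivial coaction, and $\theta(v)=Sv_{(1)}\otimes v_{(2)}$. The (only possible connection $\omega=0$ and its) covariant derivative and torsion are given, for $\sum h\otimes g\in\Omega^1H$, by the restrictions to $\Omega^1H$ of the linear extensions of \[\nabla(h\otimes g)=1\otimes h\otimes g-hg_{(1)}\otimes Sg_{(2)}\otimes g_{(3)},\qquad T(h\otimes g)=h\otimes g\otimes1-h\otimes1\otimes g+hg_{(1)}\otimes Sg_{(2)}\otimes g_{(3)}.\]
   Context: For a unital algebra $A$, $\Omega^1A=\ker(\mu:A\otimes A\to A)$ with $da=1\otimes a-a\otimes1$, and $\Omega^1A\otimes_A\Omega^1A\subset A^{\otimes3}$, with $d(a\otimes b)=1\otimes a\otimes b-a\otimes1\otimes b+a\otimes b\otimes1$. A quantum frame resolution of $(M,\Omega^1M)$ consists of a quantum principal bundle ($P$ a right comodule algebra over a Hopf algebra $H'$ with invertible antipode, $M$ its coinvariants, $P$ flat over $M$, and $P\otimes_MP\to P\otimes H'$, $p\otimes p'\mapsto pp'^{(1)}\otimes p'^{(2)}$ bijective), a right $H'$-comodule $V$, and an $H'$-comodule map $\theta:V\to\Omega^1P$ with image in $P\Omega^1M$ such that $s_\theta:(P\otimes V)^{H'}\to\Omega^1M$, $\sum p_i\otimes v_i\mapsto\sum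 p_i\theta(v_i)$, is bijective. Given a left strong connection $\omega:H'\to\Omega^1P$ (here only $\omega=0$ is possible since $\ker\epsilon$ of $k$ is $0$), the covariant derivative is $\nabla(w)=1\otimes w-\sum_ip_i\otimes\theta(v_i)-\sum_ip_i{}^{(1)}\omega(p_i{}^{(2)})\theta(v_i)$ for $s_\theta^{-1}(w)=\sum_ip_i\otimes v_i$, and the torsion is $T=d-\nabla$. *)

theory Defs
  imports "HOL-Library.Poly_Mapping"
begin

section \<open>Vector spaces with a chosen basis\<close>

(* A k-vector space with basis indexed by the type 'a is represented as the
space of finitely supported functions 'a \<Rightarrow>\<^sub>0 'k.  Tensor products of such
spaces are the free spaces on the product of the bases (tensors right-nested).
Subspaces (e.g. ker \<epsilon>, coinvariants, \<Omega>^1) are represented as subsets. *)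

definition smul :: "'k::field \<Rightarrow> ('a \<Rightarrow>\<^sub>0 'k) \<Rightarrow> ('a \<Rightarrow>\<^sub>0 'k)" where
  "smul c x = Poly_Mapping.map (\<lambda>a. c * a) x"

definition bas :: "'a \<Rightarrow> ('a \<Rightarrow>\<^sub>0 'k::field)" where
  "bas a = Poly_Mapping.single a 1"

definition lin :: "('a \<Rightarrow> ('b \<Rightarrow>\<^sub>0 'k::field)) \<Rightarrow> ('a \<Rightarrow>\<^sub>0 'k) \<Rightarrow> ('b \<Rightarrow>\<^sub>0 'k)" where
  "lin f x = (\<Sum>a\<in>Poly_Mapping.keys x. smul (Poly_Mapping.lookup x a) (f a))"

definition tens :: "('a \<Rightarrow>\<^sub>0 'k::field) \<Rightarrow> ('b \<Rightarrow>\<^sub>0 'k) \<Rightarrow> ('a \<times> 'b \<Rightarrow>\<^sub>0 'k)" where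
  "tens x y = lin (\<lambda>a. lin (\<lambda>b. bas (a, b)) y) x"

definition tmap :: "(('a \<Rightarrow>\<^sub>0 'k::field) \<Rightarrow> ('c \<Rightarrow>\<^sub>0 'k)) \<Rightarrow> (('b \<Rightarrow>\<^sub>0 'k) \<Rightarrow> ('d \<Rightarrow>\<^sub>0 'k))
    \<Rightarrow> ('a \<times> 'b \<Rightarrow>\<^sub>0 'k) \<Rightarrow> ('c \<times> 'd \<Rightarrow>\<^sub>0 'k)" where
  "tmap f g = lin (\<lambda>(a, b). tens (f (bas a)) (g (bas b)))"

definition rassoc :: "(('a \<times> 'b) \<times> 'c \<Rightarrow>\<^sub>0 'k::field) \<Rightarrow> ('a \<times> 'b \<times> 'c \<Rightarrow>\<^sub>0 'k)" where
  "rassoc = lin (\<lambda>((a, b), c). bas (a, b, c))"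

definition fspan :: "('a \<Rightarrow>\<^sub>0 'k::field) set \<Rightarrow> ('a \<Rightarrow>\<^sub>0 'k) set" where
  "fspan S = {x. \<exists>A f. finite A \<and> A \<subseteq> S \<and> x = (\<Sum>a\<in>A. smul (f a) a)}"

definition subspace :: "('a \<Rightarrow>\<^sub>0 'k::field) set \<Rightarrow> bool" where
  "subspace W \<longleftrightarrow> 0 \<in> W \<and> (\<forall>x\<in>W. \<forall>y\<in>W. x + y \<in> W) \<and> (\<forall>c. \<forall>x\<in>W. smul c x \<in> W)"

definition tensW :: "('a \<Rightarrow>\<^sub>0 'k::field) set \<Rightarrow> ('b \<Rightarrow>\<^sub>0 'k) set \<Rightarrow> ('a \<times> 'b \<Rightarrow>\<^sub>0 'k) set" where
  "tensW A B = fspan {tens a b | a b. a \<in> A \<and> b \<in> B}"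

definition linear_map :: "(('a \<Rightarrow>\<^sub>0 'k::field) \<Rightarrow> ('b \<Rightarrow>\<^sub>0 'k)) \<Rightarrow> bool" where
  "linear_map f \<longleftrightarrow> (\<forall>x y. f (x + y) = f x + f y) \<and> (\<forall>c x. f (smul c x) = smul c (f x))"

definition linear_form :: "(('a \<Rightarrow>\<^sub>0 'k::field) \<Rightarrow> 'k) \<Rightarrow> bool" where
  "linear_form f \<longleftrightarrow> (\<forall>x y. f (x + y) = f x + f y) \<and> (\<forall>c x. f (smul c x) = c * f x)"

definition bilinear_map :: "(('a \<Rightarrow>\<^sub>0 'k::field) \<Rightarrow> ('b \<Rightarrow>\<^sub>0 'k) \<Rightarrow> ('c \<Rightarrow>\<^sub>0 'k)) \<Rightarrow> bool" where
  "bilinear_map m \<longleftrightarrow> (\<forall>x. linear_map (m x)) \<and> (\<forall>y. linear_map (\<lambda>x. m x y))"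

section \<open>Algebras, Hopf algebras, comodules\<close>

record (overloaded) ('a, 'k::zero) alg =
  amul :: "('a \<Rightarrow>\<^sub>0 'k) \<Rightarrow> ('a \<Rightarrow>\<^sub>0 'k) \<Rightarrow> ('a \<Rightarrow>\<^sub>0 'k)"
  aone :: "'a \<Rightarrow>\<^sub>0 'k"

record (overloaded) ('a, 'k::zero) hopf = "('a, 'k) alg" +
  hcop :: "('a \<Rightarrow>\<^sub>0 'k) \<Rightarrow> ('a \<times> 'a \<Rightarrow>\<^sub>0 'k)"
  hcou :: "('a \<Rightarrow>\<^sub>0 'k) \<Rightarrow> 'k"
  hant :: "('a \<Rightarrow>\<^sub>0 'k) \<Rightarrow> ('a \<Rightarrow>\<^sub>0 'k)"

definition mu :: "(('a \<Rightarrow>\<^sub>0 'k::field) \<Rightarrow> ('a \<Rightarrow>\<^sub>0 'k) \<Rightarrow> ('a \<Rightarrow>\<^sub>0 'k)) \<Rightarrow> ('a \<times> 'a \<Rightarrow>\<^sub>0 'k) \<Rightarrow> ('a \<Rightarrow>\<^sub>0 'k)" where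
  "mu m = lin (\<lambda>(a, b). m (bas a) (bas b))"

definition tmul :: "(('a \<Rightarrow>\<^sub>0 'k::field) \<Rightarrow> ('a \<Rightarrow>\<^sub>0 'k) \<Rightarrow> ('a \<Rightarrow>\<^sub>0 'k))
    \<Rightarrow> (('b \<Rightarrow>\<^sub>0 'k) \<Rightarrow> ('b \<Rightarrow>\<^sub>0 'k) \<Rightarrow> ('b \<Rightarrow>\<^sub>0 'k))
    \<Rightarrow> ('a \<times> 'b \<Rightarrow>\<^sub>0 'k) \<Rightarrow> ('a \<times> 'b \<Rightarrow>\<^sub>0 'k) \<Rightarrow> ('a \<times> 'b \<Rightarrow>\<^sub>0 'k)" where
  "tmul m m' X Y = lin (\<lambda>(a, b). lin (\<lambda>(c, d). tens (m (bas a) (bas c)) (m' (bas b) (bas d))) Y) X"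

definition is_alg :: "('a, 'k::field, 'z) alg_scheme \<Rightarrow> bool" where
  "is_alg A \<longleftrightarrow> bilinear_map (amul A)
     \<and> (\<forall>x y z. amul A (amul A x y) z = amul A x (amul A y z))
     \<and> (\<forall>x. amul A (aone A) x = x \<and> amul A x (aone A) = x)"

definition hopf_alg :: "('a, 'k::field, 'z) hopf_scheme \<Rightarrow> bool" where
  "hopf_alg H \<longleftrightarrow> is_alg H \<and> linear_map (hcop H) \<and> linear_form (hcou H) \<and> linear_map (hant H)
     \<and> (\<forall>x. rassoc (tmap (hcop H) id (hcop H x)) = tmap id (hcop H) (hcop H x))
     \<and> (\<forall>x. lin (\<lambda>(a, b). smul (hcou H (bas a)) (bas b)) (hcop H x) = x)
     \<and> (\<forall>x. lin (\<lambda>(a, b). smul (hcou H (bas b)) (bas a)) (hcop H x) = x)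
     \<and> (\<forall>x y. hcop H (amul H x y) = tmul (amul H) (amul H) (hcop H x) (hcop H y))
     \<and> hcop H (aone H) = tens (aone H) (aone H)
     \<and> (\<forall>x y. hcou H (amul H x y) = hcou H x * hcou H y)
     \<and> hcou H (aone H) = 1
     \<and> (\<forall>x. mu (amul H) (tmap (hant H) id (hcop H x)) = smul (hcou H x) (aone H))
     \<and> (\<forall>x. mu (amul H) (tmap id (hant H) (hcop H x)) = smul (hcou H x) (aone H))"

(* the ground field k as (trivial) Hopf algebra, with basis the unit type *)
definition trivial_hopf :: "(unit, 'k::field) hopf" where
  "trivial_hopf = \<lparr>amul = (\<lambda>x y. smul (Poly_Mapping.lookup x ()) y), aone = bas (),
     hcop = (\<lambda>x. smul (Poly_Mapping.lookup x ()) (bas ((), ()))), hcou = (\<lambda>x. Poly_Mapping.lookup x ()), hant = id\<rparr>"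

definition comod_alg :: "('p, 'k::field, 'y) alg_scheme \<Rightarrow> ('h, 'k, 'z) hopf_scheme
    \<Rightarrow> (('p \<Rightarrow>\<^sub>0 'k) \<Rightarrow> ('p \<times> 'h \<Rightarrow>\<^sub>0 'k)) \<Rightarrow> bool" where
  "comod_alg P H \<delta> \<longleftrightarrow> is_alg P \<and> linear_map \<delta>
     \<and> (\<forall>x. rassoc (tmap \<delta> id (\<delta> x)) = tmap id (hcop H) (\<delta> x))
     \<and> (\<forall>x. lin (\<lambda>(a, c). smul (hcou H (bas c)) (bas a)) (\<delta> x) = x)
     \<and> (\<forall>x y. \<delta> (amul P x y) = tmul (amul P) (amul H) (\<delta> x) (\<delta> y))
     \<and> \<delta> (aone P) = tens (aone P) (aone H)"

definition comodule :: "('v \<Rightarrow>\<^sub>0 'k::field) set \<Rightarrow> (('v \<Rightarrow>\<^sub>0 'k) \<Rightarrow> ('v \<times> 'h \<Rightarrow>\<^sub>0 'k))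
    \<Rightarrow> ('h, 'k, 'z) hopf_scheme \<Rightarrow> bool" where
  "comodule W \<rho> H \<longleftrightarrow> subspace W \<and> linear_map \<rho>
     \<and> (\<forall>w\<in>W. \<rho> w \<in> tensW W UNIV)
     \<and> (\<forall>w\<in>W. rassoc (tmap \<rho> id (\<rho> w)) = tmap id (hcop H) (\<rho> w))
     \<and> (\<forall>w\<in>W. lin (\<lambda>(a, c). smul (hcou H (bas c)) (bas a)) (\<rho> w) = w)"

definition coinv :: "('h, 'k::field, 'z) hopf_scheme \<Rightarrow> (('p \<Rightarrow>\<^sub>0 'k) \<Rightarrow> ('p \<times> 'h \<Rightarrow>\<^sub>0 'k))
    \<Rightarrow> ('p \<Rightarrow>\<^sub>0 'k) set" where
  "coinv H \<delta> = {p. \<delta> p = tens p (aone H)}"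

(* tensor product coaction on P \<otimes> V: p\<otimes>v \<mapsto> p0 \<otimes> v0 \<otimes> p1 v1 *)
definition coact2 :: "('h, 'k::field, 'z) hopf_scheme \<Rightarrow> (('p \<Rightarrow>\<^sub>0 'k) \<Rightarrow> ('p \<times> 'h \<Rightarrow>\<^sub>0 'k))
    \<Rightarrow> (('v \<Rightarrow>\<^sub>0 'k) \<Rightarrow> ('v \<times> 'h \<Rightarrow>\<^sub>0 'k)) \<Rightarrow> ('p \<times> 'v \<Rightarrow>\<^sub>0 'k) \<Rightarrow> (('p \<times> 'v) \<times> 'h \<Rightarrow>\<^sub>0 'k)" where
  "coact2 H \<delta> \<rho> = lin (\<lambda>(p, v). lin (\<lambda>(p', c). lin (\<lambda>(v', c').
       tens (bas (p', v')) (amul H (bas c) (bas c'))) (\<rho> (bas v))) (\<delta> (bas p)))"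

definition coinv2 :: "('h, 'k::field, 'z) hopf_scheme \<Rightarrow> (('p \<Rightarrow>\<^sub>0 'k) \<Rightarrow> ('p \<times> 'h \<Rightarrow>\<^sub>0 'k))
    \<Rightarrow> ('v \<Rightarrow>\<^sub>0 'k) set \<Rightarrow> (('v \<Rightarrow>\<^sub>0 'k) \<Rightarrow> ('v \<times> 'h \<Rightarrow>\<^sub>0 'k)) \<Rightarrow> ('p \<times> 'v \<Rightarrow>\<^sub>0 'k) set" where
  "coinv2 H \<delta> W \<rho> = {x. x \<in> tensW UNIV W \<and> coact2 H \<delta> \<rho> x = tens x (aone H)}"

section \<open>Universal calculus\<close>

definition omega1 :: "('p, 'k::field, 'y) alg_scheme \<Rightarrow> ('p \<Rightarrow>\<^sub>0 'k) set \<Rightarrow> ('p \<times> 'p \<Rightarrow>\<^sub>0 'k) set" where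
  "omega1 P M = {x. x \<in> tensW M M \<and> mu (amul P) x = 0}"

definition lact :: "('p, 'k::field, 'y) alg_scheme \<Rightarrow> ('p \<Rightarrow>\<^sub>0 'k) \<Rightarrow> ('p \<times> 'r \<Rightarrow>\<^sub>0 'k) \<Rightarrow> ('p \<times> 'r \<Rightarrow>\<^sub>0 'k)" where
  "lact P p = lin (\<lambda>(a, r). tens (amul P p (bas a)) (bas r))"

(* product \<Omega>^1 P \<otimes>_P \<Omega>^1 P \<subseteq> P^{\<otimes>3}: (a\<otimes>b)(c\<otimes>d) = a \<otimes> bc \<otimes> d *)
definition omul :: "('p, 'k::field, 'y) alg_scheme \<Rightarrow> ('p \<times> 'p \<Rightarrow>\<^sub>0 'k) \<Rightarrow> ('p \<times> 'p \<Rightarrow>\<^sub>0 'k) \<Rightarrow> ('p \<times> 'p \<times> 'p \<Rightarrow>\<^sub>0 'k)" where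
  "omul P X Y = lin (\<lambda>(a, b). lin (\<lambda>(c, d). tens (bas a) (tens (amul P (bas b) (bas c)) (bas d))) Y) X"

definition d1 :: "('p, 'k::field, 'y) alg_scheme \<Rightarrow> ('p \<times> 'p \<Rightarrow>\<^sub>0 'k) \<Rightarrow> ('p \<times> 'p \<times> 'p \<Rightarrow>\<^sub>0 'k)" where
  "d1 P = lin (\<lambda>(a, b). tens (aone P) (tens (bas a) (bas b)) - tens (bas a) (tens (aone P) (bas b))
                       + tens (bas a) (tens (bas b) (aone P)))"

section \<open>Quantum principal bundles and frame resolutions\<close>

(* Flatness of P over the subalgebra M, via the ideal criterion: as a right
M-module (P \<otimes>_M I \<rightarrow> P injective for every left ideal I of M) and as a left
M-module (J \<otimes>_M P \<rightarrow> P injective for every right ideal J of M).  Elements of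
P \<otimes>_M I are represented by elements of P \<otimes> I modulo the balancing relations. *)
definition left_ideal :: "('p, 'k::field, 'y) alg_scheme \<Rightarrow> ('p \<Rightarrow>\<^sub>0 'k) set \<Rightarrow> ('p \<Rightarrow>\<^sub>0 'k) set \<Rightarrow> bool" where
  "left_ideal P M I \<longleftrightarrow> subspace I \<and> I \<subseteq> M \<and> (\<forall>m\<in>M. \<forall>i\<in>I. amul P m i \<in> I)"

definition right_ideal :: "('p, 'k::field, 'y) alg_scheme \<Rightarrow> ('p \<Rightarrow>\<^sub>0 'k) set \<Rightarrow> ('p \<Rightarrow>\<^sub>0 'k) set \<Rightarrow> bool" where
  "right_ideal P M I \<longleftrightarrow> subspace I \<and> I \<subseteq> M \<and> (\<forall>m\<in>M. \<forall>i\<in>I. amul P i m \<in> I)"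

definition flat_over :: "('p, 'k::field, 'y) alg_scheme \<Rightarrow> ('p \<Rightarrow>\<^sub>0 'k) set \<Rightarrow> bool" where
  "flat_over P M \<longleftrightarrow>
     (\<forall>I. left_ideal P M I \<longrightarrow> (\<forall>x\<in>tensW UNIV I. mu (amul P) x = 0 \<longrightarrow>
        x \<in> fspan {tens (amul P p m) i - tens p (amul P m i) | p m i. m \<in> M \<and> i \<in> I}))
   \<and> (\<forall>J. right_ideal P M J \<longrightarrow> (\<forall>x\<in>tensW J UNIV. mu (amul P) x = 0 \<longrightarrow>
        x \<in> fspan {tens (amul P j m) p - tens j (amul P m p) | j m p. j \<in> J \<and> m \<in> M}))"

definition canmap :: "('p, 'k::field, 'y) alg_scheme \<Rightarrow> (('p \<Rightarrow>\<^sub>0 'k) \<Rightarrow> ('p \<times> 'h \<Rightarrow>\<^sub>0 'k))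
    \<Rightarrow> ('p \<times> 'p \<Rightarrow>\<^sub>0 'k) \<Rightarrow> ('p \<times> 'h \<Rightarrow>\<^sub>0 'k)" where
  "canmap P \<delta> = lin (\<lambda>(p, q). lin (\<lambda>(q', c). tens (amul P (bas p) (bas q')) (bas c)) (\<delta> (bas q)))"

(* Quantum principal bundle: the induced map P \<otimes>_M P \<rightarrow> P \<otimes> H is bijective,
i.e. canmap is surjective with kernel exactly the balancing relations of \<otimes>_M. *)
definition qpb :: "('p, 'k::field, 'y) alg_scheme \<Rightarrow> ('h, 'k, 'z) hopf_scheme
    \<Rightarrow> (('p \<Rightarrow>\<^sub>0 'k) \<Rightarrow> ('p \<times> 'h \<Rightarrow>\<^sub>0 'k)) \<Rightarrow> bool" where
  "qpb P H \<delta> \<longleftrightarrow> hopf_alg H \<and> bij (hant H) \<and> comod_alg P H \<delta>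
     \<and> flat_over P (coinv H \<delta>)
     \<and> surj (canmap P \<delta>)
     \<and> (\<forall>x. canmap P \<delta> x = 0 \<longleftrightarrow>
          x \<in> fspan {tens (amul P p m) q - tens p (amul P m q) | p m q. m \<in> coinv H \<delta>})"

definition stheta :: "('p, 'k::field, 'y) alg_scheme \<Rightarrow> (('v \<Rightarrow>\<^sub>0 'k) \<Rightarrow> ('p \<times> 'p \<Rightarrow>\<^sub>0 'k))
    \<Rightarrow> ('p \<times> 'v \<Rightarrow>\<^sub>0 'k) \<Rightarrow> ('p \<times> 'p \<Rightarrow>\<^sub>0 'k)" where
  "stheta P \<theta> = lin (\<lambda>(p, v). lact P (bas p) (\<theta> (bas v)))"

definition qfr :: "('p, 'k::field, 'y) alg_scheme \<Rightarrow> ('h, 'k, 'z) hopf_scheme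
    \<Rightarrow> (('p \<Rightarrow>\<^sub>0 'k) \<Rightarrow> ('p \<times> 'h \<Rightarrow>\<^sub>0 'k)) \<Rightarrow> ('v \<Rightarrow>\<^sub>0 'k) set
    \<Rightarrow> (('v \<Rightarrow>\<^sub>0 'k) \<Rightarrow> ('v \<times> 'h \<Rightarrow>\<^sub>0 'k)) \<Rightarrow> (('v \<Rightarrow>\<^sub>0 'k) \<Rightarrow> ('p \<times> 'p \<Rightarrow>\<^sub>0 'k)) \<Rightarrow> bool" where
  "qfr P H \<delta> W \<rho> \<theta> \<longleftrightarrow> qpb P H \<delta> \<and> comodule W \<rho> H \<and> linear_map \<theta>
     \<and> (\<forall>w\<in>W. \<theta> w \<in> omega1 P UNIV)
     \<and> (\<forall>w\<in>W. coact2 H \<delta> \<delta> (\<theta> w) = tmap \<theta> id (\<rho> w))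
     \<and> (\<forall>w\<in>W. \<theta> w \<in> fspan {lact P p u | p u. u \<in> omega1 P (coinv H \<delta>)})
     \<and> bij_betw (stheta P \<theta>) (coinv2 H \<delta> W \<rho>) (omega1 P (coinv H \<delta>))"

definition nabla :: "('p, 'k::field, 'y) alg_scheme \<Rightarrow> ('h, 'k, 'z) hopf_scheme
    \<Rightarrow> (('p \<Rightarrow>\<^sub>0 'k) \<Rightarrow> ('p \<times> 'h \<Rightarrow>\<^sub>0 'k)) \<Rightarrow> ('v \<Rightarrow>\<^sub>0 'k) set
    \<Rightarrow> (('v \<Rightarrow>\<^sub>0 'k) \<Rightarrow> ('v \<times> 'h \<Rightarrow>\<^sub>0 'k)) \<Rightarrow> (('v \<Rightarrow>\<^sub>0 'k) \<Rightarrow> ('p \<times> 'p \<Rightarrow>\<^sub>0 'k))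
    \<Rightarrow> (('h \<Rightarrow>\<^sub>0 'k) \<Rightarrow> ('p \<times> 'p \<Rightarrow>\<^sub>0 'k)) \<Rightarrow> ('p \<times> 'p \<Rightarrow>\<^sub>0 'k) \<Rightarrow> ('p \<times> 'p \<times> 'p \<Rightarrow>\<^sub>0 'k)" where
  "nabla P H \<delta> W \<rho> \<theta> \<omega> w =
     (let x = (THE x. x \<in> coinv2 H \<delta> W \<rho> \<and> stheta P \<theta> x = w) in
        tens (aone P) w
      - lin (\<lambda>(p, v). tens (bas p) (\<theta> (bas v))) x
      - lin (\<lambda>(p, v). lin (\<lambda>(p', c). lact P (bas p') (omul P (\<omega> (bas c)) (\<theta> (bas v)))) (\<delta> (bas p))) x)"

definition torsion :: "('p, 'k::field, 'y) alg_scheme \<Rightarrow> ('h, 'k, 'z) hopf_scheme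
    \<Rightarrow> (('p \<Rightarrow>\<^sub>0 'k) \<Rightarrow> ('p \<times> 'h \<Rightarrow>\<^sub>0 'k)) \<Rightarrow> ('v \<Rightarrow>\<^sub>0 'k) set
    \<Rightarrow> (('v \<Rightarrow>\<^sub>0 'k) \<Rightarrow> ('v \<times> 'h \<Rightarrow>\<^sub>0 'k)) \<Rightarrow> (('v \<Rightarrow>\<^sub>0 'k) \<Rightarrow> ('p \<times> 'p \<Rightarrow>\<^sub>0 'k))
    \<Rightarrow> (('h \<Rightarrow>\<^sub>0 'k) \<Rightarrow> ('p \<times> 'p \<Rightarrow>\<^sub>0 'k)) \<Rightarrow> ('p \<times> 'p \<Rightarrow>\<^sub>0 'k) \<Rightarrow> ('p \<times> 'p \<times> 'p \<Rightarrow>\<^sub>0 'k)" where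
  "torsion P H \<delta> W \<rho> \<theta> \<omega> w = d1 P w - nabla P H \<delta> W \<rho> \<theta> \<omega> w"

end

theory Submission
  imports Defs
begin

lemma lookup_smul[simp]: "Poly_Mapping.lookup (smul c x) a = c * Poly_Mapping.lookup x a"
  unfolding smul_def by (simp add: Poly_Mapping.map.rep_eq when_def)

lemma lookup_bas: "Poly_Mapping.lookup (bas a :: 'a \<Rightarrow>\<^sub>0 'k::field) b = (if a = b then 1 else 0)"
  unfolding bas_def by (simp add: lookup_single when_def)

lemma smul_add_r: "smul c (x + y) = smul c x + smul c y"
  by (rule poly_mapping_eqI) (simp add: lookup_add algebra_simps)
lemma smul_add_l: "smul (c + d) x = smul c x + smul d x"
  by (rule poly_mapping_eqI) (simp add: lookup_add algebra_simps)
lemma smul_diff_r: "smul c (x - y) = smul c x - smul c y"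
  by (rule poly_mapping_eqI) (simp add: lookup_minus algebra_simps)
lemma smul_minus_r: "smul c (- x) = - smul c x"
  by (rule poly_mapping_eqI) (simp)
lemma smul_smul: "smul c (smul d x) = smul (c * d) x"
  by (rule poly_mapping_eqI) (simp)
lemma smul_one[simp]: "smul 1 x = x"
  by (rule poly_mapping_eqI) (simp)
lemma smul_zero_l[simp]: "smul 0 x = 0"
  by (rule poly_mapping_eqI) (simp)
lemma smul_zero_r[simp]: "smul c 0 = 0"
  by (rule poly_mapping_eqI) (simp)

lemma smul_sum: "smul c (sum f A) = (\<Sum>a\<in>A. smul c (f a))"
  by (induction A rule: infinite_finite_induct) (auto simp: smul_add_r)

lemma lin_superset:
  assumes "finite S" "Poly_Mapping.keys x \<subseteq> S"
  shows "lin f x = (\<Sum>a\<in>S. smul (Poly_Mapping.lookup x a) (f a))"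
  unfolding lin_def
  by (rule sum.mono_neutral_left) (use assms in \<open>auto simp: in_keys_iff\<close>)

lemma lin_add: "lin f (x + y) = lin f x + lin f y"
proof -
  let ?S = "Poly_Mapping.keys x \<union> Poly_Mapping.keys y"
  have "Poly_Mapping.keys (x+y) \<subseteq> ?S" by (rule Poly_Mapping.keys_add)
  then show ?thesis
    by (simp add: lin_superset[of ?S] lookup_add smul_add_l sum.distrib)
qed

lemma keys_smul: "Poly_Mapping.keys (smul c x) \<subseteq> Poly_Mapping.keys x"
  by (auto simp: in_keys_iff)

lemma lin_smul: "lin f (smul c x) = smul c (lin f x)"
  using keys_smul[of c x]
  by (simp add: lin_superset[of "Poly_Mapping.keys x"] smul_sum smul_smul)

lemma linear_lin: "linear_map (lin f)"
  unfolding linear_map_def by (simp add: lin_add lin_smul)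

lemma lin_bas[simp]: "lin f (bas a) = f a"
  by (simp add: lin_superset[of "{a}"] lookup_bas bas_def)

lemma lin_zero[simp]: "lin f 0 = 0"
  by (simp add: lin_def)

lemma linear_zero: "linear_map L \<Longrightarrow> L 0 = 0"
  unfolding linear_map_def by (metis add_cancel_right_right add_0)
lemma linear_add: "linear_map L \<Longrightarrow> L (x + y) = L x + L y"
  unfolding linear_map_def by blast
lemma linear_smul: "linear_map L \<Longrightarrow> L (smul c x) = smul c (L x)"
  unfolding linear_map_def by blast
lemma neg_smul: "- y = smul (-1) y"
  by (rule poly_mapping_eqI) simp
lemma linear_minus: "linear_map L \<Longrightarrow> L (- x) = - L x"
  by (simp add: neg_smul[of x] neg_smul[of "L x"] linear_smul)
lemma linear_diff: "linear_map L \<Longrightarrow> L (x - y) = L x - L y"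
proof -
  assume l: "linear_map L"
  have "L (x - y) = L (x + - y)" by simp
  also have "\<dots> = L x + L (- y)" by (rule linear_add[OF l])
  also have "\<dots> = L x - L y" by (simp add: linear_minus[OF l])
  finally show ?thesis .
qed
lemma linear_sum: "linear_map L \<Longrightarrow> L (sum g A) = (\<Sum>a\<in>A. L (g a))"
  by (induction A rule: infinite_finite_induct) (auto simp: linear_zero linear_add)

lemma lin_comp: "linear_map L \<Longrightarrow> L (lin f x) = lin (\<lambda>a. L (f a)) x"
  unfolding lin_def by (simp add: linear_sum linear_smul)

lemma lin_bas_id: "lin bas x = x"
proof (rule poly_mapping_eqI)
  fix k
  show "Poly_Mapping.lookup (lin bas x) k = Poly_Mapping.lookup x k"
  proof (cases "k \<in> Poly_Mapping.keys x")
    case True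
    have "Poly_Mapping.lookup (lin bas x) k = (\<Sum>a\<in>Poly_Mapping.keys x. Poly_Mapping.lookup x a * (if a = k then 1 else 0))"
      by (simp add: lin_def lookup_sum lookup_bas)
    also have "\<dots> = Poly_Mapping.lookup x k"
      using True by (simp add: if_distrib cong: if_cong)
    finally show ?thesis .
  next
    case False
    then show ?thesis by (auto simp: lin_def lookup_sum lookup_bas in_keys_iff intro!: sum.neutral)
  qed
qed

lemma linear_ext: "linear_map L \<Longrightarrow> L x = lin (\<lambda>a. L (bas a)) x"
  by (metis lin_bas_id lin_comp)

lemma linear_eq: "linear_map L1 \<Longrightarrow> linear_map L2 \<Longrightarrow> (\<And>a. L1 (bas a) = L2 (bas a)) \<Longrightarrow> L1 x = L2 x"
  using linear_ext[of L1 x] linear_ext[of L2 x] by simp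

lemma lin_fun_add: "lin (\<lambda>a. f a + g a) x = lin f x + lin g x"
  unfolding lin_def by (simp add: smul_add_r sum.distrib)
lemma lin_fun_diff: "lin (\<lambda>a. f a - g a) x = lin f x - lin g x"
  unfolding lin_def by (simp add: smul_diff_r sum_subtractf)
lemma lin_fun_smul: "lin (\<lambda>a. smul c (f a)) x = smul c (lin f x)"
  unfolding lin_def by (simp add: smul_sum smul_smul mult.commute)
lemma lin_fun_zero[simp]: "lin (\<lambda>a. 0) x = 0"
  unfolding lin_def by simp

lemma linear_id: "linear_map id" "linear_map (\<lambda>x. x)"
  unfolding linear_map_def by auto
lemma linear_compose: "linear_map f \<Longrightarrow> linear_map g \<Longrightarrow> linear_map (\<lambda>x. f (g x))"
  unfolding linear_map_def by auto
lemma linear_o: "linear_map f \<Longrightarrow> linear_map g \<Longrightarrow> linear_map (f \<circ> g)"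
  unfolding linear_map_def by auto
lemma linear_plus: "linear_map f \<Longrightarrow> linear_map g \<Longrightarrow> linear_map (\<lambda>x. f x + g x)"
  unfolding linear_map_def by (auto simp: smul_add_r algebra_simps)
lemma linear_minus_fun: "linear_map f \<Longrightarrow> linear_map g \<Longrightarrow> linear_map (\<lambda>x. f x - g x)"
  unfolding linear_map_def by (auto simp: smul_diff_r algebra_simps)
lemma linear_smul_map: "linear_map (smul c)"
  unfolding linear_map_def by (auto simp: smul_add_r smul_smul mult.commute)

lemma linear_lin_fun: assumes "\<And>a. linear_map (\<lambda>p. F p a)" shows "linear_map (\<lambda>p. lin (F p) x)"
proof -
  have "F (p + q) = (\<lambda>a. F p a + F q a)" "F (smul c p) = (\<lambda>a. smul c (F p a))" for p q c
    using assms unfolding linear_map_def by auto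
  then show ?thesis unfolding linear_map_def by (simp add: lin_fun_add lin_fun_smul)
qed

lemma tens_bas[simp]: "tens (bas a) (bas b) = bas (a, b)"
  by (simp add: tens_def)
lemma linear_tens1: "linear_map (\<lambda>x. tens x y)"
  unfolding tens_def by (rule linear_lin)
lemma linear_tens2: "linear_map (tens x)"
  unfolding tens_def by (rule linear_lin_fun) (rule linear_lin)

lemma bilinear_eq:
  assumes "\<And>y. linear_map (\<lambda>x. F x y)" "\<And>y. linear_map (\<lambda>x. G x y)"
    "\<And>a. linear_map (\<lambda>y. F (bas a) y)" "\<And>a. linear_map (\<lambda>y. G (bas a) y)"
    "\<And>a b. F (bas a) (bas b) = G (bas a) (bas b)"
  shows "F x y = G x y"
proof -
  have "\<And>a. F (bas a) y = G (bas a) y"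
    by (rule linear_eq[OF assms(3,4)]) (rule assms(5))
  then show ?thesis by (rule linear_eq[OF assms(1,2)])
qed

lemma linear_eq2: "linear_map L1 \<Longrightarrow> linear_map L2 \<Longrightarrow> (\<And>a b. L1 (bas (a, b)) = L2 (bas (a, b))) \<Longrightarrow> L1 x = L2 x"
  by (rule linear_eq) auto

lemma linear_tmap: "linear_map (tmap f g)"
  unfolding tmap_def by (rule linear_lin)

lemma tmap_tens: assumes "linear_map f" "linear_map g" shows "tmap f g (tens x y) = tens (f x) (g y)"
proof (rule bilinear_eq[where F="\<lambda>x y. tmap f g (tens x y)" and G="\<lambda>x y. tens (f x) (g y)"])
  show "linear_map (\<lambda>x. tmap f g (tens x y))" for y
    by (rule linear_compose[OF linear_tmap linear_tens1])
  show "linear_map (\<lambda>x. tens (f x) (g y))" for y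
    by (rule linear_compose[OF linear_tens1 assms(1)])
  show "linear_map (\<lambda>y. tmap f g (tens (bas a) y))" for a
    by (rule linear_compose[OF linear_tmap linear_tens2])
  show "linear_map (\<lambda>y. tens (f (bas a)) (g y))" for a
    by (rule linear_compose[OF linear_tens2 assms(2)])
qed (simp add: tmap_def)

lemma tmap_bas: "tmap f g (bas (a, b)) = tens (f (bas a)) (g (bas b))"
  by (simp add: tmap_def)

lemma subspace_0: "subspace V \<Longrightarrow> 0 \<in> V" unfolding subspace_def by blast
lemma subspace_add: "subspace V \<Longrightarrow> x \<in> V \<Longrightarrow> y \<in> V \<Longrightarrow> x + y \<in> V" unfolding subspace_def by blast
lemma subspace_smul: "subspace V \<Longrightarrow> x \<in> V \<Longrightarrow> smul c x \<in> V" unfolding subspace_def by blast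
lemma subspace_diff: "subspace V \<Longrightarrow> x \<in> V \<Longrightarrow> y \<in> V \<Longrightarrow> x - y \<in> V"
proof -
  assume a: "subspace V" "x \<in> V" "y \<in> V"
  have eq: "x - y = x + smul (-1) y" by (rule poly_mapping_eqI) (simp add: lookup_add lookup_minus)
  show ?thesis unfolding eq using a by (simp add: subspace_add subspace_smul)
qed
lemma subspace_sum: "subspace V \<Longrightarrow> (\<And>a. a \<in> A \<Longrightarrow> g a \<in> V) \<Longrightarrow> sum g A \<in> V"
  by (induction A rule: infinite_finite_induct) (auto simp: subspace_0 subspace_add)
lemma subspace_lin: "subspace V \<Longrightarrow> (\<And>a. f a \<in> V) \<Longrightarrow> lin f x \<in> V"
  unfolding lin_def by (rule subspace_sum) (auto simp: subspace_smul)
lemma subspace_all: "subspace V \<Longrightarrow> (\<And>a. bas a \<in> V) \<Longrightarrow> x \<in> V"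
  using subspace_lin[of V bas x] by (simp add: lin_bas_id)
lemma subspace_linear: "linear_map L \<Longrightarrow> subspace V \<Longrightarrow> (\<And>a. L (bas a) \<in> V) \<Longrightarrow> L x \<in> V"
  using linear_ext[of L x] subspace_lin[of V "\<lambda>a. L (bas a)" x] by simp
lemma subspace_preimage: "linear_map L \<Longrightarrow> subspace V \<Longrightarrow> subspace {x. L x \<in> V}"
  unfolding subspace_def by (auto simp: linear_zero linear_add linear_smul)
lemma subspace_zero_set: "subspace {0}"
  unfolding subspace_def by auto
lemma subspace_kernel: "linear_map L \<Longrightarrow> subspace {x. L x = 0}"
  using subspace_preimage[OF _ subspace_zero_set, of L] by simp

lemma subspace_fspan: "subspace (fspan S)"
  unfolding subspace_def
proof (intro conjI ballI allI)
  show "0 \<in> fspan S" unfolding fspan_def by (intro CollectI exI[of _ "{}"]) simp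
next
  fix x y assume "x \<in> fspan S" "y \<in> fspan S"
  then obtain A f B g where A: "finite A" "A \<subseteq> S" "x = (\<Sum>a\<in>A. smul (f a) a)"
    and B: "finite B" "B \<subseteq> S" "y = (\<Sum>a\<in>B. smul (g a) a)" unfolding fspan_def by blast
  define h where "h a = (if a \<in> A then f a else 0) + (if a \<in> B then g a else 0)" for a
  have "(\<Sum>a\<in>A \<union> B. smul (h a) a) = (\<Sum>a\<in>A \<union> B. smul (if a \<in> A then f a else 0) a) + (\<Sum>a\<in>A \<union> B. smul (if a \<in> B then g a else 0) a)"
    unfolding h_def by (simp only: smul_add_l sum.distrib)
  also have "(\<Sum>a\<in>A \<union> B. smul (if a \<in> A then f a else 0) a) = x"
    unfolding A(3) using A(1) B(1) by (intro sum.mono_neutral_cong_right) auto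
  also have "(\<Sum>a\<in>A \<union> B. smul (if a \<in> B then g a else 0) a) = y"
    unfolding B(3) using A(1) B(1) by (intro sum.mono_neutral_cong_right) auto
  finally have eq: "x + y = (\<Sum>a\<in>A \<union> B. smul (h a) a)" by simp
  have "finite (A \<union> B)" "A \<union> B \<subseteq> S" using A B by auto
  then show "x + y \<in> fspan S" unfolding fspan_def eq by (intro CollectI exI[of _ "A \<union> B"] exI[of _ h]) simp
next
  fix c x assume "x \<in> fspan S"
  then obtain A f where A: "finite A" "A \<subseteq> S" "x = (\<Sum>a\<in>A. smul (f a) a)" unfolding fspan_def by blast
  then have eq: "smul c x = (\<Sum>a\<in>A. smul (c * f a) a)" by (simp add: smul_sum smul_smul)
  show "smul c x \<in> fspan S" unfolding fspan_def eq using A(1,2) by (intro CollectI exI[of _ A] exI[of _ "\<lambda>a. c * f a"]) simp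
qed

lemma fspan_base: "s \<in> S \<Longrightarrow> s \<in> fspan S"
  unfolding fspan_def by (rule CollectI, rule exI[of _ "{s}"], rule exI[of _ "\<lambda>_. 1"]) auto

lemma fspan_least: assumes "subspace V" "S \<subseteq> V" "x \<in> fspan S" shows "x \<in> V"
proof -
  obtain A f where A: "finite A" "A \<subseteq> S" "x = (\<Sum>a\<in>A. smul (f a) a)" using assms(3) unfolding fspan_def by blast
  show ?thesis unfolding A(3) using A(2) assms(1,2) by (intro subspace_sum) (auto intro: subspace_smul)
qed

lemma tensW_UNIV: "x \<in> tensW UNIV UNIV"
  unfolding tensW_def
proof (rule subspace_all[OF subspace_fspan], rule fspan_base)
  fix a :: "'a \<times> 'b"
  obtain p q where "a = (p, q)" by (cases a)
  then show "bas a \<in> {tens a b |a b. a \<in> UNIV \<and> b \<in> UNIV}"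
    by (auto intro!: exI[of _ "bas p"] exI[of _ "bas q"])
qed

lemma tens_in_tensW: "a \<in> A \<Longrightarrow> b \<in> B \<Longrightarrow> tens a b \<in> tensW A B"
  unfolding tensW_def by (rule fspan_base) blast

abbreviation T :: "(unit, 'k::field) hopf" where "T \<equiv> trivial_hopf"

lemma T_simps[simp]: "amul T x y = smul (Poly_Mapping.lookup x ()) y" "aone T = bas ()"
  "hcop T x = smul (Poly_Mapping.lookup x ()) (bas ((), ()))" "hcou T x = Poly_Mapping.lookup x ()"
  "hant T = id"
  by (simp_all add: trivial_hopf_def)

lemma single_vec: assumes "\<And>k. k = a0" shows "x = smul (Poly_Mapping.lookup x a0) (bas a0)"
proof (rule poly_mapping_eqI)
  fix k
  have "k = a0" by (rule assms)
  then show "Poly_Mapping.lookup x k = Poly_Mapping.lookup (smul (Poly_Mapping.lookup x a0) (bas a0)) k"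
    by (simp add: lookup_bas)
qed

lemma unit_vec: "(x :: unit \<Rightarrow>\<^sub>0 'k::field) = smul (Poly_Mapping.lookup x ()) (bas ())"
  by (rule single_vec) simp
lemma unit2_vec: "(x :: unit \<times> unit \<Rightarrow>\<^sub>0 'k::field) = smul (Poly_Mapping.lookup x ((),())) (bas ((),()))"
  by (rule single_vec) (auto simp: prod_eq_iff)

lemma lookup_bas_same[simp]: "Poly_Mapping.lookup (bas a :: _ \<Rightarrow>\<^sub>0 'k::field) a = 1"
  by (simp add: lookup_bas)

lemma tens_smul1: "tens (smul c x) y = smul c (tens x y)"
  by (rule linear_smul[OF linear_tens1])
lemma tens_smul2: "tens x (smul c y) = smul c (tens x y)"
  by (rule linear_smul[OF linear_tens2])
lemma tmap_smul: "tmap f g (smul c x) = smul c (tmap f g x)"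
  by (rule linear_smul[OF linear_tmap])

lemma hopf_T: "hopf_alg T"
  unfolding hopf_alg_def is_alg_def bilinear_map_def
proof (intro conjI allI)
  show "linear_map (amul T x)" for x by (simp add: trivial_hopf_def linear_smul_map)
  show "linear_map (\<lambda>x. amul T x y)" for y
    unfolding linear_map_def by (simp add: lookup_add smul_add_l smul_smul)
  show "amul T (amul T x y) z = amul T x (amul T y z)" for x y z by (simp add: smul_smul)
  show "amul T (aone T) x = x" for x by simp
  show "amul T x (aone T) = x" for x by (simp add: unit_vec[symmetric])
  show "linear_map (hcop T)" unfolding linear_map_def by (simp add: lookup_add smul_add_l smul_smul)
  show "linear_form (hcou T)" unfolding linear_form_def by (simp add: lookup_add)
  show "linear_map (hant T)" by (simp add: linear_id)
  show "rassoc (tmap (hcop T) id (hcop T x)) = tmap id (hcop T) (hcop T x)" for x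
    by (simp add: tmap_smul tmap_bas rassoc_def lin_smul)
  show "lin (\<lambda>(a, b). smul (hcou T (bas a)) (bas b)) (hcop T x) = x" for x
    by (simp add: lin_smul unit_vec[symmetric])
  show "lin (\<lambda>(a, b). smul (hcou T (bas b)) (bas a)) (hcop T x) = x" for x
    by (simp add: lin_smul unit_vec[symmetric])
  show "hcop T (amul T x y) = tmul (amul T) (amul T) (hcop T x) (hcop T y)" for x y
    by (simp add: tmul_def lin_smul lin_fun_smul smul_smul mult.commute)
  show "hcop T (aone T) = tens (aone T) (aone T)" by simp
  show "hcou T (amul T x y) = hcou T x * hcou T y" for x y by simp
  show "hcou T (aone T) = 1" by simp
  show "mu (amul T) (tmap (hant T) id (hcop T x)) = smul (hcou T x) (aone T)" for x
    by (simp add: mu_def tmap_smul tmap_bas lin_smul)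
  show "mu (amul T) (tmap id (hant T) (hcop T x)) = smul (hcou T x) (aone T)" for x
    by (simp add: mu_def tmap_smul tmap_bas lin_smul)
qed

lemma linear_rassoc: "linear_map rassoc" unfolding rassoc_def by (rule linear_lin)

definition th :: "('b, 'k::field, 'z) hopf_scheme \<Rightarrow> ('b \<Rightarrow>\<^sub>0 'k) \<Rightarrow> ('b \<times> 'b \<Rightarrow>\<^sub>0 'k)" where
  "th H v = tmap (hant H) id (hcop H v)"
definition psi :: "('b, 'k::field, 'z) hopf_scheme \<Rightarrow> ('b \<times> 'b \<Rightarrow>\<^sub>0 'k) \<Rightarrow> ('b \<times> 'b \<Rightarrow>\<^sub>0 'k)" where
  "psi H = lin (\<lambda>(h, g). lact H (bas h) (hcop H (bas g)))"
definition Epsm :: "('b, 'k::field, 'z) hopf_scheme \<Rightarrow> ('b \<times> 'b \<Rightarrow>\<^sub>0 'k) \<Rightarrow> ('b \<Rightarrow>\<^sub>0 'k)" where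
  "Epsm H = lin (\<lambda>(a, b). smul (hcou H (bas b)) (bas a))"
definition TF :: "(('b \<times> 'b \<Rightarrow>\<^sub>0 'k::field) \<Rightarrow> ('b \<Rightarrow>\<^sub>0 'k)) \<Rightarrow> ('b \<times> 'b \<times> 'b \<Rightarrow>\<^sub>0 'k) \<Rightarrow> ('b \<times> 'b \<Rightarrow>\<^sub>0 'k)" where
  "TF F = lin (\<lambda>(a, c, d). tens (F (bas (a, c))) (bas d))"

lemma lin_TF: "linear_map (TF F)" unfolding TF_def by (rule linear_lin)

context
  fixes H :: "('b, 'k::field) hopf"
  assumes hH: "hopf_alg H"
begin

lemma m_lin1: "linear_map (\<lambda>x. amul H x y)" and m_lin2: "linear_map (amul H x)"
  using hH unfolding hopf_alg_def is_alg_def bilinear_map_def by auto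
lemma m_assoc: "amul H (amul H x y) z = amul H x (amul H y z)"
  using hH unfolding hopf_alg_def is_alg_def by auto
lemma m_one1[simp]: "amul H (aone H) x = x" and m_one2[simp]: "amul H x (aone H) = x"
  using hH unfolding hopf_alg_def is_alg_def by auto
lemma D_lin: "linear_map (hcop H)" and S_lin: "linear_map (hant H)" and e_lin: "linear_form (hcou H)"
  using hH unfolding hopf_alg_def by auto
lemma coassoc: "rassoc (tmap (hcop H) id (hcop H x)) = tmap id (hcop H) (hcop H x)"
  using hH unfolding hopf_alg_def by auto
lemma counitL: "lin (\<lambda>(a, b). smul (hcou H (bas a)) (bas b)) (hcop H x) = x"
  using hH unfolding hopf_alg_def by auto
lemma counitR: "lin (\<lambda>(a, b). smul (hcou H (bas b)) (bas a)) (hcop H x) = x"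
  using hH unfolding hopf_alg_def by auto
lemma antipL: "mu (amul H) (tmap (hant H) id (hcop H x)) = smul (hcou H x) (aone H)"
  using hH unfolding hopf_alg_def by auto
lemma antipR: "mu (amul H) (tmap id (hant H) (hcop H x)) = smul (hcou H x) (aone H)"
  using hH unfolding hopf_alg_def by auto

lemma e_add: "hcou H (x + y) = hcou H x + hcou H y" and e_smul: "hcou H (smul c x) = c * hcou H x"
  using e_lin unfolding linear_form_def by auto
lemma e_zero: "hcou H 0 = 0" using e_smul[of 0 0] by simp
lemma e_diff: "hcou H (x - y) = hcou H x - hcou H y"
  using e_add[of "x - y" y] by simp

lemma linear_mu: "linear_map (mu (amul H))" unfolding mu_def by (rule linear_lin)
lemma mu_bas: "mu (amul H) (bas (a, b)) = amul H (bas a) (bas b)" by (simp add: mu_def)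
lemma mu_tens: "mu (amul H) (tens x y) = amul H x y"
  by (rule bilinear_eq[where F="\<lambda>x y. mu (amul H) (tens x y)" and G="\<lambda>x y. amul H x y"],
      (rule linear_compose[OF linear_mu linear_tens1] linear_compose[OF linear_mu linear_tens2] m_lin1 m_lin2)+,
      simp add: mu_def)

lemma lact_lin: "linear_map (lact H p)" unfolding lact_def by (rule linear_lin)
lemma lact_lin1: "linear_map (\<lambda>p. lact H p u)"
  unfolding lact_def
  by (rule linear_lin_fun) (auto intro: linear_compose[OF linear_tens1 m_lin1])
lemma lact_tens: "lact H p (tens x y) = tens (amul H p x) y"
  by (rule bilinear_eq[where F="\<lambda>x y. lact H p (tens x y)" and G="\<lambda>x y. tens (amul H p x) y"],
      (rule linear_compose[OF lact_lin linear_tens1] linear_compose[OF lact_lin linear_tens2]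
        linear_compose[OF linear_tens1 m_lin2] linear_tens2)+, simp add: lact_def)
lemma lact_bas: "lact H p (bas (a, b)) = tens (amul H p (bas a)) (bas b)"
  by (simp add: lact_def)
lemma lact_lact: "lact H p (lact H q u) = lact H (amul H p q) u"
  by (rule linear_eq2[OF linear_compose[OF lact_lin lact_lin] lact_lin]) (simp add: lact_bas lact_tens m_assoc)
lemma lact_one: "lact H (aone H) u = u"
  by (rule linear_eq2[OF lact_lin linear_id(2)]) (simp add: lact_bas)
lemma mu_lact: "mu (amul H) (lact H p u) = amul H p (mu (amul H) u)"
  by (rule linear_eq2[OF linear_compose[OF linear_mu lact_lin] linear_compose[OF m_lin2 linear_mu]])
     (simp add: lact_bas mu_tens m_assoc mu_bas)


lemma e_one: "hcou H (aone H) = 1" using hH unfolding hopf_alg_def by auto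

lemma lin_th: "linear_map (th H)" unfolding th_def by (rule linear_compose[OF linear_tmap D_lin])
lemma lin_psi: "linear_map (psi H)" unfolding psi_def by (rule linear_lin)
lemma lin_Eps: "linear_map (Epsm H)" unfolding Epsm_def by (rule linear_lin)
lemma lin_st: "linear_map (stheta H f)" unfolding stheta_def by (rule linear_lin)

lemma st_tens: assumes "linear_map f" shows "stheta H f (tens x y) = lact H x (f y)"
  by (rule bilinear_eq[where F="\<lambda>x y. stheta H f (tens x y)" and G="\<lambda>x y. lact H x (f y)"],
      (rule linear_compose[OF lin_st linear_tens1] linear_compose[OF lin_st linear_tens2]
        lact_lin1 linear_compose[OF lact_lin assms])+, simp add: stheta_def)
lemma psi_tens: "psi H (tens x y) = lact H x (hcop H y)"
  by (rule bilinear_eq[where F="\<lambda>x y. psi H (tens x y)" and G="\<lambda>x y. lact H x (hcop H y)"],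
      (rule linear_compose[OF lin_psi linear_tens1] linear_compose[OF lin_psi linear_tens2]
        lact_lin1 linear_compose[OF lact_lin D_lin])+, simp add: psi_def)
lemma Eps_tens: "Epsm H (tens x y) = smul (hcou H y) x"
proof (rule bilinear_eq[where F="\<lambda>x y. Epsm H (tens x y)" and G="\<lambda>x y. smul (hcou H y) x"])
  show "linear_map (\<lambda>y. smul (hcou H y) (bas a))" for a
    unfolding linear_map_def by (simp add: e_add e_smul smul_add_l smul_smul)
  show "linear_map (\<lambda>x. Epsm H (tens x y))" for y by (rule linear_compose[OF lin_Eps linear_tens1])
  show "linear_map (\<lambda>y. Epsm H (tens (bas a) y))" for a by (rule linear_compose[OF lin_Eps linear_tens2])
  show "linear_map (\<lambda>x. smul (hcou H y) x)" for y by (rule linear_smul_map)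
  show "Epsm H (tens (bas a) (bas b)) = smul (hcou H (bas b)) (bas a)" for a b by (simp add: Epsm_def)
qed

lemma st_lact: "stheta H (th H) (lact H p x) = lact H p (stheta H (th H) x)"
  by (rule linear_eq2[OF linear_compose[OF lin_st lact_lin] linear_compose[OF lact_lin lin_st]])
     (simp add: lact_tens st_tens[OF lin_th] lact_lact flip: tens_bas)
lemma psi_lact: "psi H (lact H p x) = lact H p (psi H x)"
  by (rule linear_eq2[OF linear_compose[OF lin_psi lact_lin] linear_compose[OF lact_lin lin_psi]])
     (simp add: lact_tens psi_tens lact_lact flip: tens_bas)
lemma Eps_lact: "Epsm H (lact H p x) = amul H p (Epsm H x)"
  by (rule linear_eq2[OF linear_compose[OF lin_Eps lact_lin] linear_compose[OF m_lin2 lin_Eps]])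
     (simp add: lact_tens Eps_tens linear_smul[OF m_lin2] flip: tens_bas)



lemma TF_rassoc: fixes F :: "('b \<times> 'b \<Rightarrow>\<^sub>0 'k) \<Rightarrow> ('b \<Rightarrow>\<^sub>0 'k)"
  shows "TF F (rassoc Z) = tmap F id Z"
proof (rule linear_eq[OF linear_compose[OF lin_TF linear_rassoc] linear_tmap])
  fix a :: "('b \<times> 'b) \<times> 'b"
  obtain x c d where "a = ((x, c), d)" using prod.collapse by metis
  then show "TF F (rassoc (bas a)) = tmap F id (bas a)"
    by (simp add: rassoc_def TF_def tmap_bas)
qed

lemma TF_key:
  assumes F: "linear_map F" and FD: "\<And>x. F (hcop H x) = smul (hcou H x) (aone H)"
  shows "TF F (tmap id (hcop H) (hcop H v)) = tens (aone H) v"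
proof -
  have "TF F (tmap id (hcop H) (hcop H v)) = tmap F id (tmap (hcop H) id (hcop H v))"
    by (simp add: TF_rassoc flip: coassoc)
  also have "\<dots> = tmap (\<lambda>x. smul (hcou H x) (aone H)) id (hcop H v)"
    by (rule linear_eq2[OF linear_compose[OF linear_tmap linear_tmap] linear_tmap])
       (simp add: tmap_bas tmap_tens[OF F linear_id(1)] FD)
  also have "\<dots> = tens (aone H) (lin (\<lambda>(a, b). smul (hcou H (bas a)) (bas b)) (hcop H v))"
    by (rule linear_eq2[OF linear_tmap linear_compose[OF linear_tens2 linear_lin]])
       (simp add: tmap_bas tens_smul1 tens_smul2)
  finally show ?thesis by (simp add: counitL)
qed

lemma TF_tens: "TF F (tens (bas a) Y) = lin (\<lambda>(c, d). tens (F (bas (a, c))) (bas d)) Y"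
  by (rule linear_eq2[OF linear_compose[OF lin_TF linear_tens2] linear_lin]) (simp add: TF_def)

lemma psi_th: "psi H (th H v) = tens (aone H) v"
proof -
  let ?F = "\<lambda>x. mu (amul H) (tmap (hant H) id x)"
  have "psi H (tmap (hant H) id X) = TF ?F (tmap id (hcop H) X)" for X
  proof (rule linear_eq2[OF linear_compose[OF lin_psi linear_tmap] linear_compose[OF lin_TF linear_tmap]])
    fix a b
    show "psi H (tmap (hant H) id (bas (a, b))) = TF ?F (tmap id (hcop H) (bas (a, b)))"
      by (simp add: tmap_bas psi_tens TF_tens mu_tens lact_def)
  qed
  then show ?thesis unfolding th_def
    by (simp add: TF_key linear_compose[OF linear_mu linear_tmap] antipL)
qed

lemma st_D: "stheta H (th H) (hcop H v) = tens (aone H) v"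
proof -
  let ?F = "\<lambda>x. mu (amul H) (tmap id (hant H) x)"
  have "stheta H (th H) X = TF ?F (tmap id (hcop H) X)" for X
  proof (rule linear_eq2[OF lin_st linear_compose[OF lin_TF linear_tmap]])
    fix a b
    have "lact H (bas a) (tmap (hant H) id Y) = lin (\<lambda>(c, d). tens (amul H (bas a) (hant H (bas c))) (bas d)) Y" for Y
      by (rule linear_eq2[OF linear_compose[OF lact_lin linear_tmap] linear_lin])
         (simp add: tmap_bas lact_tens)
    then show "stheta H (th H) (bas (a, b)) = TF ?F (tmap id (hcop H) (bas (a, b)))"
      by (simp add: tmap_bas TF_tens mu_tens stheta_def th_def)
  qed
  then show ?thesis
    by (simp add: TF_key linear_compose[OF linear_mu linear_tmap] antipR)
qed

lemma psi_st: "psi H (stheta H (th H) x) = x"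
  by (rule linear_eq2[OF linear_compose[OF lin_psi lin_st] linear_id(2)])
     (simp add: stheta_def psi_lact psi_th lact_tens)

lemma st_psi: "stheta H (th H) (psi H x) = x"
  by (rule linear_eq2[OF linear_compose[OF lin_st lin_psi] linear_id(2)])
     (simp add: psi_def st_lact st_D lact_tens)

lemma mu_th: "mu (amul H) (th H v) = smul (hcou H v) (aone H)"
  unfolding th_def by (rule antipL)

lemma mu_st: "mu (amul H) (stheta H (th H) x) = Epsm H x"
  by (rule linear_eq2[OF linear_compose[OF linear_mu lin_st] lin_Eps])
     (simp add: stheta_def mu_lact mu_th linear_smul[OF m_lin2] Epsm_def)

lemma Eps_psi: "Epsm H (psi H w) = mu (amul H) w"
  by (rule linear_eq2[OF linear_compose[OF lin_Eps lin_psi] linear_mu])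
     (simp add: psi_def Eps_lact mu_def counitR[folded Epsm_def])


lemma kerEps: assumes "Epsm H x = 0" shows "x \<in> tensW UNIV {v. hcou H v = 0}"
proof -
  let ?L = "\<lambda>y. y - tens (Epsm H y) (aone H)"
  have "?L x \<in> tensW UNIV {v. hcou H v = 0}"
  proof (rule subspace_linear[where L="?L" and x=x])
    show "linear_map ?L" by (rule linear_minus_fun[OF linear_id(2) linear_compose[OF linear_tens1 lin_Eps]])
    show "subspace (tensW UNIV {v. hcou H v = 0})" unfolding tensW_def by (rule subspace_fspan)
    fix a :: "'b \<times> 'b"
    obtain p q where a: "a = (p, q)" by (cases a)
    have "?L (bas a) = tens (bas p) (bas q - smul (hcou H (bas q)) (aone H))"
      by (simp add: a Epsm_def linear_diff[OF linear_tens2] tens_smul1 tens_smul2)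
    also have "\<dots> \<in> tensW UNIV {v. hcou H v = 0}"
      by (rule tens_in_tensW) (auto simp: e_diff e_smul e_one)
    finally show "?L (bas a) \<in> tensW UNIV {v. hcou H v = 0}" .
  qed
  then show ?thesis using assms by (simp add: linear_zero[OF linear_tens1])
qed

lemma Eps_ker: assumes "x \<in> tensW UNIV {v. hcou H v = 0}" shows "Epsm H x = 0"
proof -
  have "x \<in> {x. Epsm H x = 0}"
    by (rule fspan_least[OF subspace_kernel[OF lin_Eps] _ assms[unfolded tensW_def]]) (auto simp: Eps_tens)
  then show ?thesis by simp
qed

lemma flat_left: assumes "x \<in> tensW UNIV I"
  shows "x - tens (aone H) (mu (amul H) x) \<in> fspan {tens (amul H p m) i - tens p (amul H m i) | p m i. m \<in> UNIV \<and> i \<in> I}"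
proof -
  let ?G = "{tens (amul H p m) i - tens p (amul H m i) | p m i. m \<in> UNIV \<and> i \<in> I}"
  have "x \<in> {x. x - tens (aone H) (mu (amul H) x) \<in> fspan ?G}"
    using assms unfolding tensW_def
  proof (rule fspan_least[rotated 2])
    show "subspace {x. x - tens (aone H) (mu (amul H) x) \<in> fspan ?G}"
      by (rule subspace_preimage[OF linear_minus_fun[OF linear_id(2) linear_compose[OF linear_tens2 linear_mu]] subspace_fspan])
    show "{tens a b |a b. a \<in> UNIV \<and> b \<in> I} \<subseteq> {x. x - tens (aone H) (mu (amul H) x) \<in> fspan ?G}"
    proof safe
      fix a b assume "b \<in> I"
      then have "tens (amul H (aone H) a) b - tens (aone H) (amul H a b) \<in> ?G" by blast
      then show "tens a b - tens (aone H) (mu (amul H) (tens a b)) \<in> fspan ?G"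
        by (simp add: mu_tens fspan_base)
    qed
  qed
  then show ?thesis by simp
qed

lemma flat_right: assumes "x \<in> tensW J UNIV"
  shows "x - tens (mu (amul H) x) (aone H) \<in> fspan {tens (amul H j m) p - tens j (amul H m p) | j m p. j \<in> J \<and> m \<in> UNIV}"
proof -
  let ?G = "{tens (amul H j m) p - tens j (amul H m p) | j m p. j \<in> J \<and> m \<in> UNIV}"
  have "x \<in> {x. x - tens (mu (amul H) x) (aone H) \<in> fspan ?G}"
    using assms unfolding tensW_def
  proof (rule fspan_least[rotated 2])
    show "subspace {x. x - tens (mu (amul H) x) (aone H) \<in> fspan ?G}"
      by (rule subspace_preimage[OF linear_minus_fun[OF linear_id(2) linear_compose[OF linear_tens1 linear_mu]] subspace_fspan])
    show "{tens a b |a b. a \<in> J \<and> b \<in> UNIV} \<subseteq> {x. x - tens (mu (amul H) x) (aone H) \<in> fspan ?G}"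
    proof safe
      fix a b assume "a \<in> J"
      then have "tens (amul H a b) (aone H) - tens a (amul H b (aone H)) \<in> ?G" by blast
      then have "0 - (tens (amul H a b) (aone H) - tens a (amul H b (aone H))) \<in> fspan ?G"
        by (intro subspace_diff[OF subspace_fspan] subspace_0[OF subspace_fspan] fspan_base)
      then show "tens a b - tens (mu (amul H) (tens a b)) (aone H) \<in> fspan ?G"
        by (simp add: mu_tens)
    qed
  qed
  then show ?thesis by simp
qed


lemma lin_tmul2: "linear_map (tmul (amul H) m' X)"
  unfolding tmul_def
  by (rule linear_lin_fun) (auto simp: split_beta intro: linear_lin)
lemma lin_tmul1: "linear_map (\<lambda>X. tmul (amul H) m' X Y)"
  unfolding tmul_def by (rule linear_lin)

lemma dl_mul: "tens (amul H x y) (bas ()) = tmul (amul H) (amul T) (tens x (bas ())) (tens y (bas ()))"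
  by (rule bilinear_eq[where F="\<lambda>x y. tens (amul H x y) (bas ())"
        and G="\<lambda>x y. tmul (amul H) (amul T) (tens x (bas ())) (tens y (bas ()))"],
      (rule linear_compose[OF linear_tens1 m_lin1] linear_compose[OF linear_tens1 m_lin2]
        linear_compose[OF lin_tmul1 linear_tens1] linear_compose[OF lin_tmul2 linear_tens1])+,
      simp add: tmul_def)

lemma canmap_H: "canmap H (\<lambda>h. tens h (bas ())) x = tens (mu (amul H) x) (bas ())"
  unfolding canmap_def
  by (rule linear_eq2[OF linear_lin linear_compose[OF linear_tens1 linear_mu]]) (simp add: mu_def)

end

lemma dl_coassoc: "rassoc (tmap (\<lambda>h. tens h (bas ())) id (tens x (bas ()))) = tmap id (hcop T) (tens x (bas ()))"
  by (rule linear_eq[OF linear_compose[OF linear_rassoc linear_compose[OF linear_tmap linear_tens1]]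
        linear_compose[OF linear_tmap linear_tens1]]) (simp add: tmap_bas rassoc_def)

lemma dl_counit: "lin (\<lambda>(a, c). smul (hcou T (bas c)) (bas a)) (tens x (bas ())) = x"
  by (rule linear_eq[OF linear_compose[OF linear_lin linear_tens1] linear_id(2)]) simp

lemma coact2_T: "coact2 T (\<lambda>h. tens h (bas ())) (\<lambda>h. tens h (bas ())) X = tens X (bas ())"
  unfolding coact2_def by (rule linear_eq2[OF linear_lin linear_tens1]) simp

lemma pi_l: "tens (lin (\<lambda>(a, u). bas a) y) (bas ()) = y"
  by (rule linear_eq2[OF linear_compose[OF linear_tens1 linear_lin] linear_id(2)]) simp
lemma pi_r: "lin (\<lambda>(a, u). bas a) (tens z (bas ())) = z"
  by (rule linear_eq[OF linear_compose[OF linear_lin linear_tens1] linear_id(2)]) simp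

lemma lin_split_diff: "lin (\<lambda>(a, b). f a b - g a b) x = lin (\<lambda>(a, b). f a b) x - lin (\<lambda>(a, b). g a b) x"
proof -
  have e: "(\<lambda>(a, b). f a b - g a b) = (\<lambda>p. (case p of (a, b) \<Rightarrow> f a b) - (case p of (a, b) \<Rightarrow> g a b))"
    by (auto simp: fun_eq_iff)
  show ?thesis unfolding e by (rule lin_fun_diff)
qed
lemma lin_split_add: "lin (\<lambda>(a, b). f a b + g a b) x = lin (\<lambda>(a, b). f a b) x + lin (\<lambda>(a, b). g a b) x"
proof -
  have e: "(\<lambda>(a, b). f a b + g a b) = (\<lambda>p. (case p of (a, b) \<Rightarrow> f a b) + (case p of (a, b) \<Rightarrow> g a b))"
    by (auto simp: fun_eq_iff)
  show ?thesis unfolding e by (rule lin_fun_add)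
qed
lemma lin_split_zero: "lin (\<lambda>(a, b). 0) x = 0"
proof -
  have e: "(\<lambda>(a, b). 0) = (\<lambda>p. 0)" by (auto simp: fun_eq_iff)
  show ?thesis unfolding e by (rule lin_fun_zero)
qed


context
  fixes H :: "('b, 'k::field) hopf"
  assumes hH: "hopf_alg H"
begin

lemma coinv_T: "coinv T (\<lambda>h. tens h (bas ())) = UNIV" by (simp add: coinv_def)

lemma coinv2_T: "coinv2 T (\<lambda>h. tens h (bas ())) W (\<lambda>h. tens h (bas ())) = tensW UNIV W"
  by (auto simp: coinv2_def coact2_T)

lemma omega1_UNIV: "omega1 H UNIV = {x. mu (amul H) x = 0}"
  by (auto simp: omega1_def tensW_UNIV)

lemma mu_zero_fspan: "mu (amul H) x = 0 \<Longrightarrow> x \<in> fspan {tens (amul H p m) q - tens p (amul H m q) | p m q. m \<in> UNIV \<and> q \<in> UNIV}"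
  using flat_left[OF hH tensW_UNIV, of x] by (simp add: linear_zero[OF linear_tens2])

lemma fspan_mu_zero: assumes "x \<in> fspan {tens (amul H p m) q - tens p (amul H m q) | p m q. m \<in> UNIV \<and> q \<in> UNIV}"
  shows "mu (amul H) x = 0"
proof -
  have "x \<in> {x. mu (amul H) x = 0}"
    by (rule fspan_least[OF subspace_kernel[OF linear_mu[OF hH]] _ assms])
       (auto simp: linear_diff[OF linear_mu[OF hH]] mu_tens[OF hH] m_assoc[OF hH])
  then show ?thesis by simp
qed

lemma qfr_part: "qfr H T (\<lambda>h. tens h (bas ())) {v. hcou H v = 0} (\<lambda>v. tens v (bas ())) (th H)"
  unfolding qfr_def qpb_def coinv_T coinv2_T
proof (intro conjI)
  show "hopf_alg T" by (rule hopf_T)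
  show "bij (hant T)" by simp
  have isH: "is_alg H" using hH unfolding hopf_alg_def by blast
  show "comod_alg H T (\<lambda>h. tens h (bas ()))" unfolding comod_alg_def
    by (intro conjI allI isH linear_tens1 dl_coassoc dl_counit dl_mul[OF hH]) simp
  show "flat_over H UNIV" unfolding flat_over_def
  proof (intro conjI allI impI ballI)
    fix I x assume "x \<in> tensW UNIV I" "mu (amul H) x = 0"
    then show "x \<in> fspan {tens (amul H p m) i - tens p (amul H m i) |p m i. m \<in> UNIV \<and> i \<in> I}"
      using flat_left[OF hH, of x I] by (simp add: linear_zero[OF linear_tens2])
  next
    fix J x assume "x \<in> tensW J UNIV" "mu (amul H) x = 0"
    then show "x \<in> fspan {tens (amul H j m) p - tens j (amul H m p) |j m p. j \<in> J \<and> m \<in> UNIV}"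
      using flat_right[OF hH, of x J] by (simp add: linear_zero[OF linear_tens1])
  qed
  show "surj (canmap H (\<lambda>h. tens h (bas ())))"
  proof (rule surjI)
    fix y
    show "canmap H (\<lambda>h. tens h (bas ())) (tens (lin (\<lambda>(a, u). bas a) y) (aone H)) = y"
      by (simp add: canmap_H[OF hH] mu_tens[OF hH] m_one2[OF hH] pi_l)
  qed
  show "\<forall>x. (canmap H (\<lambda>h. tens h (bas ())) x = 0) =
        (x \<in> fspan {tens (amul H p m) q - tens p (amul H m q) |p m q. m \<in> UNIV})"
  proof
    fix x
    have "canmap H (\<lambda>h. tens h (bas ())) x = 0 \<longleftrightarrow> mu (amul H) x = 0"
      by (metis canmap_H[OF hH] pi_r linear_zero[OF linear_tens1] linear_zero[OF linear_lin])
    then show "(canmap H (\<lambda>h. tens h (bas ())) x = 0) =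
        (x \<in> fspan {tens (amul H p m) q - tens p (amul H m q) |p m q. m \<in> UNIV})"
      using mu_zero_fspan[of x] fspan_mu_zero[of x] by auto
  qed
  show "comodule {v. hcou H v = 0} (\<lambda>v. tens v (bas ())) T"
    unfolding comodule_def subspace_def
    by (auto simp: e_add[OF hH] e_smul[OF hH] e_zero[OF hH] linear_tens1 tens_in_tensW dl_coassoc dl_counit pi_r)
  show "linear_map (th H)" by (rule lin_th[OF hH])
  show "\<forall>w\<in>{v. hcou H v = 0}. th H w \<in> omega1 H UNIV"
    by (simp add: omega1_UNIV mu_th[OF hH])
  show "\<forall>w\<in>{v. hcou H v = 0}. coact2 T (\<lambda>h. tens h (bas ())) (\<lambda>h. tens h (bas ())) (th H w) = tmap (th H) id (tens w (bas ()))"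
    by (simp add: coact2_T tmap_tens[OF lin_th[OF hH] linear_id(1)])
  show "\<forall>w\<in>{v. hcou H v = 0}. th H w \<in> fspan {lact H p u |p u. u \<in> omega1 H UNIV}"
  proof
    fix w assume "w \<in> {v. hcou H v = 0}"
    then have "th H w = lact H (aone H) (th H w) \<and> th H w \<in> omega1 H UNIV"
      by (simp add: omega1_UNIV mu_th[OF hH] lact_one[OF hH])
    then show "th H w \<in> fspan {lact H p u |p u. u \<in> omega1 H UNIV}"
      by (intro fspan_base) blast
  qed
  show "bij_betw (stheta H (th H)) (tensW UNIV {v. hcou H v = 0}) (omega1 H UNIV)"
    unfolding bij_betw_def
  proof (intro conjI)
    show "inj_on (stheta H (th H)) (tensW UNIV {v. hcou H v = 0})"
      by (metis inj_onI psi_st[OF hH])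
    show "stheta H (th H) ` tensW UNIV {v. hcou H v = 0} = omega1 H UNIV"
    proof safe
      fix x :: "'b \<times> 'b \<Rightarrow>\<^sub>0 'k" assume "x \<in> tensW UNIV {v. hcou H v = 0}"
      then show "stheta H (th H) x \<in> omega1 H UNIV"
        by (simp add: omega1_UNIV mu_st[OF hH] Eps_ker[OF hH])
    next
      fix w assume "w \<in> omega1 H UNIV"
      then have "psi H w \<in> tensW UNIV {v. hcou H v = 0}"
        by (intro kerEps[OF hH]) (simp add: Eps_psi[OF hH] omega1_UNIV)
      then show "w \<in> stheta H (th H) ` tensW UNIV {v. hcou H v = 0}"
        by (metis image_eqI st_psi[OF hH])
    qed
  qed
qed


lemma the_psi: assumes "w \<in> omega1 H UNIV"
  shows "(THE x. x \<in> coinv2 T (\<lambda>h. tens h (bas ())) {v. hcou H v = 0} (\<lambda>h. tens h (bas ())) \<and> stheta H (th H) x = w) = psi H w"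
proof (rule the_equality)
  have "psi H w \<in> tensW UNIV {v. hcou H v = 0}"
    using assms by (intro kerEps[OF hH]) (simp add: Eps_psi[OF hH] omega1_UNIV)
  then show "psi H w \<in> coinv2 T (\<lambda>h. tens h (bas ())) {v. hcou H v = 0} (\<lambda>h. tens h (bas ())) \<and> stheta H (th H) (psi H w) = w"
    by (simp add: coinv2_T st_psi[OF hH])
next
  fix x assume "x \<in> coinv2 T (\<lambda>h. tens h (bas ())) {v. hcou H v = 0} (\<lambda>h. tens h (bas ())) \<and> stheta H (th H) x = w"
  then show "x = psi H w" by (metis psi_st[OF hH])
qed

lemma N_tens: "lin (\<lambda>(p, v). tens (bas p) (th H (bas v))) (tens x y) = tens x (th H y)"
  by (rule bilinear_eq[where F="\<lambda>x y. lin (\<lambda>(p, v). tens (bas p) (th H (bas v))) (tens x y)"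
        and G="\<lambda>x y. tens x (th H y)"],
      (rule linear_compose[OF linear_lin linear_tens1] linear_compose[OF linear_lin linear_tens2]
        linear_tens1 linear_compose[OF linear_tens2 lin_th[OF hH]])+, simp)

lemma lin_tens_bas: "lin F (tens (bas a) Y) = lin (\<lambda>(y, z). F (a, y, z)) Y"
  by (rule linear_eq2[OF linear_compose[OF linear_lin linear_tens2] linear_lin]) simp

lemma N_lact: "lin (\<lambda>(p, v). tens (bas p) (th H (bas v))) (lact H (bas h) X)
   = lin (\<lambda>(x, y, z). tens (amul H (bas h) (bas x)) (tens (hant H (bas y)) (bas z))) (tmap id (hcop H) X)"
proof (rule linear_eq2[OF linear_compose[OF linear_lin lact_lin[OF hH]] linear_compose[OF linear_lin linear_tmap]])
  fix a b
  have Yeq: "lin (\<lambda>(y, z). tens (amul H (bas h) (bas a)) (tens (hant H (bas y)) (bas z))) Y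
      = tens (amul H (bas h) (bas a)) (tmap (hant H) id Y)" for Y
    by (rule linear_eq2[OF linear_lin linear_compose[OF linear_tens2 linear_tmap]]) (simp add: tmap_bas)
  have "lin (\<lambda>(p, v). tens (bas p) (th H (bas v))) (lact H (bas h) (bas (a, b)))
      = tens (amul H (bas h) (bas a)) (th H (bas b))"
    by (simp add: lact_bas[OF hH] N_tens)
  also have "\<dots> = tens (amul H (bas h) (bas a)) (tmap (hant H) id (hcop H (bas b)))"
    by (simp add: th_def)
  also have "\<dots> = lin (\<lambda>(y, z). tens (amul H (bas h) (bas a)) (tens (hant H (bas y)) (bas z))) (hcop H (bas b))"
    by (rule Yeq[symmetric])
  also have "\<dots> = lin (\<lambda>(x, y, z). tens (amul H (bas h) (bas x)) (tens (hant H (bas y)) (bas z))) (tmap id (hcop H) (bas (a, b)))"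
    by (simp add: tmap_bas lin_tens_bas)
  finally show "lin (\<lambda>(p, v). tens (bas p) (th H (bas v))) (lact H (bas h) (bas (a, b))) =
         lin (\<lambda>(x, y, z). tens (amul H (bas h) (bas x)) (tens (hant H (bas y)) (bas z))) (tmap id (hcop H) (bas (a, b)))" .
qed

lemma nabla_part:
  assumes om: "linear_map \<omega>" "\<omega> (aone T) = 0" and w: "w \<in> omega1 H UNIV"
  shows "nabla H T (\<lambda>h. tens h (bas ())) {v. hcou H v = 0} (\<lambda>v. tens v (bas ())) (th H) \<omega> w
     = lin (\<lambda>(h, g). tens (aone H) (tens (bas h) (bas g))
                 - lin (\<lambda>(x, y, z). tens (amul H (bas h) (bas x)) (tens (hant H (bas y)) (bas z)))
                       (tmap id (hcop H) (hcop H (bas g)))) w"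
proof -
  have z: "\<omega> (bas c) = 0" for c :: unit using om(2) by simp
  have 1: "tens (aone H) w = lin (\<lambda>(h, g). tens (aone H) (tens (bas h) (bas g))) w"
    by (rule linear_eq2[OF linear_tens2 linear_lin]) simp
  have 2: "lin (\<lambda>(p, v). tens (bas p) (th H (bas v))) (psi H w) =
     lin (\<lambda>(h, g). lin (\<lambda>(x, y, z). tens (amul H (bas h) (bas x)) (tens (hant H (bas y)) (bas z)))
                       (tmap id (hcop H) (hcop H (bas g)))) w"
    by (rule linear_eq2[OF linear_compose[OF linear_lin lin_psi[OF hH]] linear_lin])
       (simp add: psi_def N_lact)
  show ?thesis
    unfolding nabla_def Let_def the_psi[OF w]
    by (simp add: z omul_def linear_zero[OF lact_lin[OF hH]] lin_split_zero lin_split_diff 1 2)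
qed

lemma torsion_part:
  assumes om: "linear_map \<omega>" "\<omega> (aone T) = 0" and w: "w \<in> omega1 H UNIV"
  shows "torsion H T (\<lambda>h. tens h (bas ())) {v. hcou H v = 0} (\<lambda>v. tens v (bas ())) (th H) \<omega> w
     = lin (\<lambda>(h, g). tens (bas h) (tens (bas g) (aone H)) - tens (bas h) (tens (aone H) (bas g))
                 + lin (\<lambda>(x, y, z). tens (amul H (bas h) (bas x)) (tens (hant H (bas y)) (bas z)))
                       (tmap id (hcop H) (hcop H (bas g)))) w"
  unfolding torsion_def nabla_part[OF om w] d1_def
  by (simp add: lin_split_add lin_split_diff)

end

theorem proposition4p1:
  fixes H :: "('b, 'k::field) hopf"
  assumes "hopf_alg H"
  shows "qfr H (trivial_hopf :: (unit, 'k) hopf) (\<lambda>h. tens h (bas ()))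
            {v. hcou H v = 0} (\<lambda>v. tens v (bas ())) (\<lambda>v. tmap (hant H) id (hcop H v))
     \<and> (\<forall>\<omega> :: (unit \<Rightarrow>\<^sub>0 'k) \<Rightarrow> ('b \<times> 'b \<Rightarrow>\<^sub>0 'k). linear_map \<omega> \<and> \<omega> (aone (trivial_hopf :: (unit, 'k) hopf)) = 0 \<longrightarrow>
        (\<forall>w\<in>omega1 H UNIV.
           nabla H (trivial_hopf :: (unit, 'k) hopf) (\<lambda>h. tens h (bas ()))
               {v. hcou H v = 0} (\<lambda>v. tens v (bas ())) (\<lambda>v. tmap (hant H) id (hcop H v)) \<omega> w
             = lin (\<lambda>(h, g). tens (aone H) (tens (bas h) (bas g))
                 - lin (\<lambda>(x, y, z). tens (amul H (bas h) (bas x)) (tens (hant H (bas y)) (bas z)))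
                       (tmap id (hcop H) (hcop H (bas g)))) w
         \<and> torsion H (trivial_hopf :: (unit, 'k) hopf) (\<lambda>h. tens h (bas ()))
               {v. hcou H v = 0} (\<lambda>v. tens v (bas ())) (\<lambda>v. tmap (hant H) id (hcop H v)) \<omega> w
             = lin (\<lambda>(h, g). tens (bas h) (tens (bas g) (aone H)) - tens (bas h) (tens (aone H) (bas g))
                 + lin (\<lambda>(x, y, z). tens (amul H (bas h) (bas x)) (tens (hant H (bas y)) (bas z)))
                       (tmap id (hcop H) (hcop H (bas g)))) w))"
proof -
  have thH: "(\<lambda>v. tmap (hant H) id (hcop H v)) = th H" by (simp add: fun_eq_iff th_def)
  show ?thesis unfolding thH
    apply (intro conjI allI impI ballI)
      apply (rule qfr_part[OF assms])
     apply (erule conjE, rule nabla_part[OF assms], assumption+)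
    apply (erule conjE, rule torsion_part[OF assms], assumption+)
    done
qed

end
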